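(* Let $d\geq 1$ and $m\geq 2$ be integers, and let $M$ be a non-empty finite set of $m$-gons in $\mathbb{R}^d$. Let $\mathcal{H}(M)$ be the hypergraph with vertex set $\mathbb{R}^d$ and edge set $\{X\subseteq \mathbb{R}^d \mid X \text{ is congruent in } \mathbb{R}^d \text{ to some } T\in M\}$. Then there exists a finite set $S$ of $(m+1)$-gons in $\mathbb{R}^d$ such that $\mathcal{H}(M)$ is equivalent to the $(m+1)$-uniform hypergraph $\mathcal{H}(S)$ with vertex set $\mathbb{R}^d$ and edge set $\{Y\subseteq\mathbb{R}^d \mid Y \text{ is congruent in } \mathbb{R}^d \text{ to some element of } S\}$.
   Context: $\mathbb{R}^d$ carries the Euclidean norm; two subsets are congruent if one is the image of the other under an isometry of Euclidean $\mathbb{R}^d$. An $m$-gon is simply an arbitrary subset of $\mathbb{R}^d$ of cardinality exactly $m$ (collinear points allowed). A hypergraph is a pair $(V,E)$ with $V$ non-empty and $E$ a set of subsets of $V$, each of cardinality at least $2$. A proper coloring is a map $\varphi:V\to C$ such that no edge $e\in E$ has $\varphi|_e$ constant; the chromatic number $\chi$ is the least $|C|$ for which a proper coloring exists. Two hypergraphs $\mathcal{H},\mathcal{G}$ on the same vertex set $S$ are equivalent if $\chi(\mathcal{H})=\chi(\mathcal{G})$ and, for every set $C$ with $|C|=\chi(\mathcal{H})=\chi(\mathcal{G})$, a map $\varphi:S\to C$ is a proper coloring of $\mathcal{H}$ if and only if it is a proper coloring of $\mathcal{G}$. *)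

theory Defs
  imports "HOL-Analysis.Analysis"
begin

definition isometry :: "('a::euclidean_space \<Rightarrow> 'a) \<Rightarrow> bool" where
  "isometry f \<longleftrightarrow> bij f \<and> (\<forall>x y. dist (f x) (f y) = dist x y)"

definition congruent :: "'a::euclidean_space set \<Rightarrow> 'a set \<Rightarrow> bool" where
  "congruent X Y \<longleftrightarrow> (\<exists>f. isometry f \<and> f ` X = Y)"

definition is_gon :: "nat \<Rightarrow> 'a set \<Rightarrow> bool" where
  "is_gon m X \<longleftrightarrow> finite X \<and> card X = m"

definition cong_edges :: "'a::euclidean_space set set \<Rightarrow> 'a set set" where
  "cong_edges M = {X. \<exists>T\<in>M. congruent T X}"

definition proper_coloring :: "'a set \<Rightarrow> 'a set set \<Rightarrow> 'c set \<Rightarrow> ('a \<Rightarrow> 'c) \<Rightarrow> bool" where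
  "proper_coloring V E C \<phi> \<longleftrightarrow>
     (\<forall>v\<in>V. \<phi> v \<in> C) \<and> (\<forall>e\<in>E. \<not> (\<exists>c. \<forall>v\<in>e. \<phi> v = c))"

definition colorable :: "'a set \<Rightarrow> 'a set set \<Rightarrow> nat \<Rightarrow> bool" where
  "colorable V E n \<longleftrightarrow> (\<exists>\<phi> :: 'a \<Rightarrow> nat. proper_coloring V E {..<n} \<phi>)"

definition chromatic_number :: "'a set \<Rightarrow> 'a set set \<Rightarrow> nat" where
  "chromatic_number V E = (LEAST n. colorable V E n)"

definition hyp_equivalent :: "'c itself \<Rightarrow> 'a set \<Rightarrow> 'a set set \<Rightarrow> 'a set set \<Rightarrow> bool" where
  "hyp_equivalent _ V E1 E2 \<longleftrightarrow>
     (\<exists>n. colorable V E1 n) \<and> (\<exists>n. colorable V E2 n) \<and>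
     chromatic_number V E1 = chromatic_number V E2 \<and>
     (\<forall>C :: 'c set. finite C \<and> card C = chromatic_number V E1 \<longrightarrow>
        (\<forall>\<phi> :: 'a \<Rightarrow> 'c. proper_coloring V E1 C \<phi> \<longleftrightarrow> proper_coloring V E2 C \<phi>))"

end

theory Submission
  imports Defs
begin


definition monoc :: "'a set \<Rightarrow> ('a \<Rightarrow> 'b) \<Rightarrow> bool" where
  "monoc e \<phi> \<longleftrightarrow> (\<exists>c. \<forall>v\<in>e. \<phi> v = c)"

lemma compactness_col:
  fixes E :: "'a set set" and K :: "nat set"
  assumes K: "finite K" and Ef: "\<forall>e\<in>E. finite e"
    and fin: "\<And>E0. E0 \<subseteq> E \<Longrightarrow> finite E0 \<Longrightarrow> \<exists>\<phi>. (\<forall>v. \<phi> v \<in> K) \<and> (\<forall>e\<in>E0. \<not> monoc e \<phi>)"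
  shows "\<exists>\<phi>. (\<forall>v. \<phi> v \<in> K) \<and> (\<forall>e\<in>E. \<not> monoc e \<phi>)"
proof -
  define X where "X = product_topology (\<lambda>_::'a. discrete_topology K) UNIV"
  have top: "topspace X = {\<phi>. \<forall>v. \<phi> v \<in> K}"
    unfolding X_def by (auto simp: PiE_def extensional_def)
  have cs: "compact_space X"
    unfolding X_def by (simp add: compact_space_product_topology compact_space_discrete_topology K)
  define C where "C e = {\<phi>\<in>topspace X. \<not> monoc e \<phi>}" for e
  have pt: "closedin X {\<phi>\<in>topspace X. \<phi> v = a}" if "a \<in> K" for v a
  proof -
    have "continuous_map X (discrete_topology K) (\<lambda>\<phi>. \<phi> v)"
      unfolding X_def by (rule continuous_map_product_projection) simp
    moreover have "closedin (discrete_topology K) {a}" using that by simp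
    ultimately have "closedin X {\<phi>\<in>topspace X. \<phi> v \<in> {a}}"
      by (rule closedin_continuous_map_preimage)
    then show ?thesis by simp
  qed
  have clC: "closedin X (C e)" if "e \<in> E" for e
  proof -
    define I where "I = {(v,w,a,b). v\<in>e \<and> w\<in>e \<and> a\<in>K \<and> b\<in>K \<and> a\<noteq>b}"
    have fI: "finite I"
    proof -
      have "I \<subseteq> e \<times> e \<times> K \<times> K" unfolding I_def by auto
      moreover have "finite (e \<times> e \<times> K \<times> K)" using Ef that K by simp
      ultimately show ?thesis by (rule finite_subset)
    qed
    have eq: "C e = \<Union> ((\<lambda>(v,w,a,b). {\<phi>\<in>topspace X. \<phi> v = a} \<inter> {\<phi>\<in>topspace X. \<phi> w = b}) ` I)"
    proof (rule set_eqI, rule iffI)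
      fix \<phi> assume "\<phi> \<in> C e"
      then have t: "\<phi> \<in> topspace X" and nm: "\<not> monoc e \<phi>" by (auto simp: C_def)
      from nm obtain v w where "v\<in>e" "w\<in>e" "\<phi> v \<noteq> \<phi> w" unfolding monoc_def by metis
      then show "\<phi> \<in> \<Union> ((\<lambda>(v,w,a,b). {\<phi>\<in>topspace X. \<phi> v = a} \<inter> {\<phi>\<in>topspace X. \<phi> w = b}) ` I)"
        using t top unfolding I_def by (auto intro!: bexI[of _ "(v,w,\<phi> v,\<phi> w)"])
    next
      fix \<phi> assume "\<phi> \<in> \<Union> ((\<lambda>(v,w,a,b). {\<phi>\<in>topspace X. \<phi> v = a} \<inter> {\<phi>\<in>topspace X. \<phi> w = b}) ` I)"
      then obtain v w a b where "v\<in>e" "w\<in>e" "a \<noteq> b" "\<phi> v = a" "\<phi> w = b" "\<phi> \<in> topspace X"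
        unfolding I_def by auto
      then show "\<phi> \<in> C e" unfolding C_def monoc_def by force
    qed
    show ?thesis unfolding eq
      apply (rule closedin_Union)
      using fI apply simp
      unfolding I_def by (auto intro!: pt)
  qed
  define U where "U = insert (topspace X) (C ` E)"
  have h1: "\<forall>S\<in>U. closedin X S" unfolding U_def using clC by auto
  have h2: "\<Inter>F \<noteq> {}" if fF: "finite F" and sU: "F \<subseteq> U" for F
  proof -
    have "F \<subseteq> insert (topspace X) (C ` E)" using sU U_def by auto
    then have sub: "F - {topspace X} \<subseteq> C ` E" by auto
    then obtain E0 where E0: "E0 \<subseteq> E" "finite E0" "F - {topspace X} = C ` E0"
      using finite_subset_image[OF finite_Diff[OF fF] sub] by auto
    obtain \<phi> where p1: "\<forall>v. \<phi> v \<in> K" and p2: "\<forall>e\<in>E0. \<not> monoc e \<phi>" using fin[OF E0(1,2)] by blast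
    have pt: "\<phi> \<in> topspace X" using p1 top by simp
    have "\<phi> \<in> S" if "S \<in> F" for S
    proof (cases "S = topspace X")
      case True then show ?thesis using pt by simp
    next
      case False
      then have "S \<in> C ` E0" using that E0(3) by blast
      then obtain e where "e \<in> E0" "S = C e" by blast
      then show ?thesis using pt p2 unfolding C_def by blast
    qed
    then have "\<phi> \<in> \<Inter>F" by blast
    then show ?thesis by auto
  qed
  have "\<Inter>U \<noteq> {}" 
    apply (rule cs[unfolded compact_space_fip, THEN spec, THEN mp])
    using h1 h2 by blast
  then obtain \<phi> where "\<phi> \<in> \<Inter>U" by auto
  then have "\<phi> \<in> topspace X" "\<forall>e\<in>E. \<phi> \<in> C e" unfolding U_def by auto
  then show ?thesis unfolding C_def top by blast
qed



lemma iso_id: "isometry id"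
  unfolding isometry_def by simp

lemma iso_comp: "isometry f \<Longrightarrow> isometry g \<Longrightarrow> isometry (f \<circ> g)"
  unfolding isometry_def by (auto intro: bij_comp)

lemma iso_inv: assumes "isometry f" shows "isometry (inv f)"
proof -
  have b: "bij f" and d: "\<And>x y. dist (f x) (f y) = dist x y" using assms unfolding isometry_def by auto
  have "dist (inv f x) (inv f y) = dist x y" for x y
    using d[of "inv f x" "inv f y"] b by (simp add: bij_is_surj surj_f_inv_f)
  then show ?thesis using b bij_imp_bij_inv unfolding isometry_def by blast
qed

lemma iso_trans: "isometry (\<lambda>x::'a::euclidean_space. x + v)"
proof -
  have "bij (\<lambda>x::'a. x + v)"
    by (rule bij_betw_byWitness[where f'="\<lambda>x. x - v"]) auto
  then show ?thesis unfolding isometry_def by (simp add: dist_norm)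
qed

lemma iso_inj: "isometry f \<Longrightarrow> inj f"
  unfolding isometry_def by (simp add: bij_is_inj)

lemma cong_edges_iso:
  assumes "X \<in> cong_edges M" "isometry f"
  shows "f ` X \<in> cong_edges M"
proof -
  obtain T g where "T \<in> M" "isometry g" "g ` T = X"
    using assms(1) unfolding cong_edges_def congruent_def by blast
  then have "isometry (f \<circ> g)" "(f \<circ> g) ` T = f ` X" using assms(2) iso_comp by (auto simp: image_comp)
  then show ?thesis using \<open>T \<in> M\<close> unfolding cong_edges_def congruent_def by blast
qed

lemma cong_edges_self: "T \<in> M \<Longrightarrow> T \<in> cong_edges M"
  unfolding cong_edges_def congruent_def using iso_id by force

lemma cong_edges_card:
  assumes "\<forall>T\<in>M. is_gon m T" "X \<in> cong_edges M"
  shows "finite X \<and> card X = m"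
proof -
  obtain T g where "T \<in> M" "isometry g" "g ` T = X"
    using assms(2) unfolding cong_edges_def congruent_def by blast
  then show ?thesis using assms(1) iso_inj[of g] card_image[of g T]
    unfolding is_gon_def by (auto simp: inj_on_subset)
qed

lemma cube_col:
  fixes a b :: real
  assumes a: "0 < a"
  shows "\<exists>col::'a::euclidean_space \<Rightarrow> ('a \<Rightarrow> int). finite (range col) \<and>
           (\<forall>x y. col x = col y \<longrightarrow> dist x y < a \<or> dist x y > b)"
proof -
  define s where "s = a / real DIM('a)"
  have s: "s > 0" unfolding s_def using a by simp
  define N :: int where "N = \<lceil>\<bar>b\<bar> / s\<rceil> + 2"
  have "\<bar>b\<bar> / s \<ge> 0" using s by simp
  then have "\<lceil>\<bar>b\<bar> / s\<rceil> \<ge> 0" by simp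
  then have N2: "N \<ge> 2" unfolding N_def by simp
  have Nb: "(real_of_int N - 1) * s > b"
  proof -
    have "real_of_int N - 1 \<ge> \<bar>b\<bar>/s + 1" unfolding N_def by linarith
    then have "(real_of_int N - 1) * s \<ge> (\<bar>b\<bar>/s + 1) * s" using s by (simp add: mult_right_mono)
    also have "(\<bar>b\<bar>/s + 1) * s = \<bar>b\<bar> + s" using s by (simp add: field_simps)
    finally show ?thesis using s by linarith
  qed
  define col where "col x = restrict (\<lambda>i. \<lfloor>(x \<bullet> i) / s\<rfloor> mod N) Basis" for x :: 'a
  have "range col \<subseteq> (\<Pi>\<^sub>E i\<in>Basis. {0..<N})"
    unfolding col_def using N2 by auto
  moreover have "finite (\<Pi>\<^sub>E i\<in>(Basis::'a set). {0..<N})" by (rule finite_PiE) auto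
  ultimately have fin: "finite (range col)" by (rule finite_subset)
  have dis: "dist x y < a \<or> dist x y > b" if eq: "col x = col y" for x y
  proof (cases "\<forall>i\<in>Basis. \<lfloor>(x \<bullet> i) / s\<rfloor> = \<lfloor>(y \<bullet> i) / s\<rfloor>")
    case True
    have lt: "\<bar>(x - y) \<bullet> i\<bar> < s" if "i \<in> Basis" for i
    proof -
      have e: "real_of_int \<lfloor>(x \<bullet> i) / s\<rfloor> = real_of_int \<lfloor>(y \<bullet> i) / s\<rfloor>" using True that by simp
      have "\<bar>(x \<bullet> i) / s - (y \<bullet> i) / s\<bar> < 1"
        using floor_correct[of "(x \<bullet> i) / s"] floor_correct[of "(y \<bullet> i) / s"] e
        unfolding abs_less_iff by linarith
      then have "\<bar>(x \<bullet> i - y \<bullet> i) / s\<bar> < 1" by (simp add: diff_divide_distrib)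
      then have "\<bar>x \<bullet> i - y \<bullet> i\<bar> / s < 1" by (simp only: abs_div_pos[OF s])
      then have "\<bar>x \<bullet> i - y \<bullet> i\<bar> < s" by (simp only: divide_less_eq_1_pos[OF s])
      then show ?thesis by (simp add: inner_diff_left)
    qed
    have "dist x y \<le> (\<Sum>i\<in>Basis. \<bar>(x - y) \<bullet> i\<bar>)" unfolding dist_norm by (rule norm_le_l1)
    also have "\<dots> < (\<Sum>i\<in>(Basis::'a set). s)"
      by (rule sum_strict_mono) (auto simp: lt)
    also have "\<dots> = a" unfolding s_def by simp
    finally show ?thesis by simp
  next
    case False
    then obtain i where i: "i \<in> Basis" and ne: "\<lfloor>(x \<bullet> i) / s\<rfloor> \<noteq> \<lfloor>(y \<bullet> i) / s\<rfloor>" by blast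
    have "\<lfloor>(x \<bullet> i) / s\<rfloor> mod N = \<lfloor>(y \<bullet> i) / s\<rfloor> mod N"
      using fun_cong[OF eq, of i] i unfolding col_def by simp
    then have "N dvd (\<lfloor>(x \<bullet> i) / s\<rfloor> - \<lfloor>(y \<bullet> i) / s\<rfloor>)" by (simp add: mod_eq_dvd_iff)
    then have "\<bar>N\<bar> \<le> \<bar>\<lfloor>(x \<bullet> i) / s\<rfloor> - \<lfloor>(y \<bullet> i) / s\<rfloor>\<bar>" using ne by (intro dvd_imp_le_int) auto
    then have "real_of_int N \<le> \<bar>real_of_int \<lfloor>(x \<bullet> i) / s\<rfloor> - real_of_int \<lfloor>(y \<bullet> i) / s\<rfloor>\<bar>"
      using N2 by linarith
    then have "real_of_int N - 1 < \<bar>(x \<bullet> i) / s - (y \<bullet> i) / s\<bar>"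
      using floor_correct[of "(x \<bullet> i) / s"] floor_correct[of "(y \<bullet> i) / s"] by linarith
    then have "real_of_int N - 1 < \<bar>(x \<bullet> i - y \<bullet> i) / s\<bar>" by (simp add: diff_divide_distrib)
    then have "real_of_int N - 1 < \<bar>x \<bullet> i - y \<bullet> i\<bar> / s" by (simp only: abs_div_pos[OF s])
    then have "(real_of_int N - 1) * s < \<bar>x \<bullet> i - y \<bullet> i\<bar>" by (simp only: pos_less_divide_eq[OF s])
    also have "\<dots> = \<bar>(x - y) \<bullet> i\<bar>" by (simp add: inner_diff_left)
    also have "\<dots> \<le> dist x y" unfolding dist_norm by (rule Basis_le_norm[OF i])
    finally show ?thesis using Nb by simp
  qed
  show ?thesis using fin dis by blast
qed



lemma chrom_finite:
  fixes M :: "'a::euclidean_space set set"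
  assumes fM: "finite M" and gon: "\<forall>T\<in>M. is_gon m T" and m2: "m \<ge> 2"
  shows "\<exists>n. colorable UNIV (cong_edges M) n"
proof -
  have "\<exists>p q. p \<in> T \<and> q \<in> T \<and> p \<noteq> q" if "T \<in> M" for T
  proof -
    have fT: "finite T" "card T \<ge> 2" using gon that m2 unfolding is_gon_def by auto
    then have "T \<noteq> {}" by auto
    then obtain p where p: "p \<in> T" by auto
    have "card (T - {p}) \<ge> 1" using fT p by (simp add: card_Diff_singleton)
    then have "T - {p} \<noteq> {}" by (metis card.empty not_one_le_zero)
    then obtain q where "q \<in> T - {p}" by auto
    then show ?thesis using p by auto
  qed
  then obtain p q where pq: "\<forall>T\<in>M. p T \<in> T \<and> q T \<in> T \<and> p T \<noteq> q T" by metis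
  define D where "D = insert 1 ((\<lambda>T. dist (p T) (q T)) ` M)"
  have fD: "finite D" "D \<noteq> {}" unfolding D_def using fM by auto
  define a where "a = Min D"
  define b where "b = Max D"
  have Dpos: "\<forall>d\<in>D. d > 0" unfolding D_def using pq by auto
  have a: "a > 0" unfolding a_def using fD Dpos by auto
  have inD: "a \<le> dist (p T) (q T) \<and> dist (p T) (q T) \<le> b" if "T \<in> M" for T
    unfolding a_def b_def using fD that D_def by auto
  obtain col :: "'a \<Rightarrow> ('a \<Rightarrow> int)" where col: "finite (range col)"
    "\<forall>x y. col x = col y \<longrightarrow> dist x y < a \<or> dist x y > b"
    using cube_col[OF a, of b] by blast
  obtain h n where h: "h ` range col = {i::nat. i < n}" "inj_on h (range col)"
    using finite_imp_inj_to_nat_seg[OF col(1)] by blast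
  define \<phi> where "\<phi> v = h (col v)" for v
  have "proper_coloring UNIV (cong_edges M) {..<n} \<phi>"
    unfolding proper_coloring_def
  proof (intro conjI ballI notI)
    fix v :: 'a
    have "h (col v) \<in> h ` range col" by auto
    then show "\<phi> v \<in> {..<n}" unfolding \<phi>_def using h(1) by auto
  next
    fix X assume X: "X \<in> cong_edges M" and mono: "\<exists>c. \<forall>v\<in>X. \<phi> v = c"
    obtain T f where T: "T \<in> M" "isometry f" "f ` T = X"
      using X unfolding cong_edges_def congruent_def by blast
    have "f (p T) \<in> X" "f (q T) \<in> X" using T pq by auto
    then have "\<phi> (f (p T)) = \<phi> (f (q T))" using mono by auto
    then have "col (f (p T)) = col (f (q T))" using h(2) unfolding \<phi>_def inj_on_def by auto
    then have "dist (f (p T)) (f (q T)) < a \<or> dist (f (p T)) (f (q T)) > b" using col(2) by blast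
    moreover have "dist (f (p T)) (f (q T)) = dist (p T) (q T)" using T(2) unfolding isometry_def by simp
    ultimately show False using inD[OF T(1)] by auto
  qed
  then show ?thesis unfolding colorable_def by blast
qed

definition tau :: "real \<Rightarrow> 'a::euclidean_space \<Rightarrow> nat \<Rightarrow> 'a \<Rightarrow> 'a" where
  "tau B u i x = x + (3 * B * real (Suc i)) *\<^sub>R u"

definition constrS :: "'a::euclidean_space set set \<Rightarrow> nat \<Rightarrow> nat \<Rightarrow> 'a set \<Rightarrow> real \<Rightarrow> 'a \<Rightarrow> 'a set set" where
  "constrS M m k F B u = {Y. \<exists>T\<in>M. Y \<subseteq> T \<union> (\<Union>i<k. tau B u i ` F) \<and> card Y = m + 1 \<and>
      (\<exists>X\<in>cong_edges M. X \<subseteq> Y)}"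

lemma tau_norm_lower:
  assumes "norm u = 1" "B > 0" "norm y \<le> B"
  shows "norm (tau B u i y) \<ge> 3 * B * real (Suc i) - B"
proof -
  have "norm ((3 * B * real (Suc i)) *\<^sub>R u) = 3 * B * real (Suc i)" using assms by simp
  moreover have "norm ((3 * B * real (Suc i)) *\<^sub>R u) \<le> norm (tau B u i y) + norm y"
    using norm_triangle_ineq4[of "tau B u i y" y] unfolding tau_def by simp
  ultimately show ?thesis using assms by linarith
qed

lemma tau_disj1:
  assumes "norm u = 1" "B > 0" "norm y \<le> B" "norm x \<le> B"
  shows "x \<noteq> tau B u i y"
proof
  assume e: "x = tau B u i y"
  have "norm (tau B u i y) \<ge> 3 * B * real (Suc i) - B" using tau_norm_lower assms by blast
  moreover have "3 * B * real (Suc i) \<ge> 3 * B" using assms(2) by simp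
  moreover have "norm (tau B u i y) \<le> B" using e assms(4) by simp
  ultimately show False using assms(2) by linarith
qed

lemma tau_disj2:
  assumes "norm u = 1" "B > 0" "norm y \<le> B" "norm z \<le> B" "tau B u i y = tau B u j z"
  shows "i = j"
proof (rule ccontr)
  assume ne: "i \<noteq> j"
  have "y - z = (3 * B * real (Suc j) - 3 * B * real (Suc i)) *\<^sub>R u"
    using assms(5) unfolding tau_def by (simp add: algebra_simps)
  then have "norm (y - z) = \<bar>3 * B * real (Suc j) - 3 * B * real (Suc i)\<bar>" using assms(1) by simp
  also have "\<dots> = 3 * B * \<bar>real (Suc j) - real (Suc i)\<bar>" using assms(2)
    by (simp add: abs_mult right_diff_distrib[symmetric])
  also have "\<dots> \<ge> 3 * B"
  proof -
    have "\<bar>real (Suc j) - real (Suc i)\<bar> \<ge> 1" using ne by linarith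
    then show ?thesis using assms(2) by simp
  qed
  finally have "norm (y - z) \<ge> 3 * B" .
  moreover have "norm (y - z) \<le> norm y + norm z" by (rule norm_triangle_ineq4)
  ultimately show False using assms by linarith
qed

lemma iso_tau: "isometry (tau B u i)"
  unfolding tau_def[abs_def] by (rule iso_trans)



lemma key:
  fixes M :: "'a::euclidean_space set set" and \<phi> :: "'a \<Rightarrow> 'b" and C :: "'b set"
  assumes gon: "\<forall>T\<in>M. is_gon m T" and m2: "m \<ge> 2" and k2: "k \<ge> 2"
    and E0: "E0 \<subseteq> cong_edges M"
    and obs: "\<forall>\<psi>::'a\<Rightarrow>nat. (\<forall>v. \<psi> v \<in> {..<k-1}) \<longrightarrow> (\<exists>e\<in>E0. monoc e \<psi>)"
    and F: "F = \<Union>E0"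
    and u: "norm u = 1" and B: "B > 0" and bnd: "\<forall>x\<in>\<Union>M \<union> F. norm x \<le> B"
    and fC: "finite C" and cC: "card C \<le> k"
    and pr: "proper_coloring UNIV (cong_edges (constrS M m k F B u)) C \<phi>"
  shows "proper_coloring UNIV (cong_edges M) C \<phi>"
proof -
  define S where "S = constrS M m k F B u"
  define G where "G T = T \<union> (\<Union>i<k. tau B u i ` F)" for T
  have vals: "\<forall>v. \<phi> v \<in> C" using pr unfolding proper_coloring_def by auto
  have nomono: "\<not> (\<exists>c. \<forall>v\<in>Y'. \<phi> v = c)" if "Y' \<in> cong_edges S" for Y'
    using pr that unfolding proper_coloring_def S_def by blast
  have mk: "f ` Y \<in> cong_edges S" if "T \<in> M" "isometry f" "Y \<subseteq> G T" "card Y = m + 1"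
      "Z \<in> cong_edges M" "Z \<subseteq> Y" for T f Y Z
  proof -
    have "Y \<in> S" unfolding S_def constrS_def using that unfolding G_def by blast
    then show ?thesis unfolding cong_edges_def congruent_def using that(2) by blast
  qed
  have Fb: "norm x \<le> B" if "x \<in> F" for x using bnd that by blast
  have Mb: "norm x \<le> B" if "x \<in> T" "T \<in> M" for x T using bnd that by blast
  have edge_card: "finite X \<and> card X = m" if "X \<in> cong_edges M" for X
    using cong_edges_card[OF gon that] .
  show ?thesis unfolding proper_coloring_def
  proof (intro conjI ballI notI)
    fix v show "\<phi> v \<in> C" using vals by blast
  next
    fix X assume X: "X \<in> cong_edges M" and "\<exists>c. \<forall>v\<in>X. \<phi> v = c"
    then obtain c where c: "\<forall>v\<in>X. \<phi> v = c" by blast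
    obtain T f where T: "T \<in> M" "isometry f" "f ` T = X"
      using X unfolding cong_edges_def congruent_def by blast
    have fT: "finite T" "card T = m" using gon T(1) unfolding is_gon_def by auto
    have TE: "T \<in> cong_edges M" using T(1) by (rule cong_edges_self)
    have injf: "inj f" using T(2) by (rule iso_inj)
    show False
    proof (cases "\<exists>i<k. \<exists>v\<in>F. \<phi> (f (tau B u i v)) = c")
      case True
      then obtain i v where iv: "i < k" "v \<in> F" "\<phi> (f (tau B u i v)) = c" by blast
      define Y where "Y = insert (tau B u i v) T"
      have nin: "tau B u i v \<notin> T"
        using tau_disj1[OF u B Fb[OF iv(2)] Mb[OF _ T(1)]] by blast
      have cY: "card Y = m + 1" unfolding Y_def using fT nin by simp
      have sY: "Y \<subseteq> G T" unfolding Y_def G_def using iv by blast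
      have "f ` Y \<in> cong_edges S" by (rule mk[OF T(1) T(2) sY cY TE]) (auto simp: Y_def)
      moreover have "\<forall>w\<in>f ` Y. \<phi> w = c" unfolding Y_def using c T(3) iv(3) by auto
      ultimately show False using nomono by blast
    next
      case False
      then have avoid: "\<forall>i<k. \<forall>v\<in>F. \<phi> (f (tau B u i v)) \<noteq> c" by blast
      have "T \<noteq> {}" using fT m2 by auto
      then have "X \<noteq> {}" using T(3) by auto
      then have cC': "c \<in> C" using c vals by auto
      define C' where "C' = C - {c}"
      have fC': "finite C'" unfolding C'_def using fC by simp
      have cardC': "card C' < k" unfolding C'_def using cC' cC fC k2 by (simp add: card_Diff_singleton)
      obtain \<beta> n' where beta: "\<beta> ` C' = {i::nat. i < n'}" "inj_on \<beta> C'"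
        using finite_imp_inj_to_nat_seg[OF fC'] by blast
      have n': "n' = card C'" using beta card_image[OF beta(2)] by simp
      have betaK: "\<beta> y < k - 1" if "y \<in> C'" for y
      proof -
        have "\<beta> y \<in> {i. i < n'}" using that beta(1) by blast
        then show ?thesis using n' cardC' by simp
      qed
      have ex: "\<exists>e\<in>E0. \<exists>c'\<in>C'. \<forall>v\<in>e. \<phi> (f (tau B u i v)) = c'" if i: "i < k" for i
      proof -
        define \<psi> where "\<psi> v = (if v \<in> F then \<beta> (\<phi> (f (tau B u i v))) else 0)" for v
        have inC': "\<phi> (f (tau B u i v)) \<in> C'" if "v \<in> F" for v
          unfolding C'_def using vals avoid i that by auto
        have "\<forall>v. \<psi> v \<in> {..<k-1}"
          unfolding \<psi>_def using inC' betaK k2 by auto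
        then obtain e where e: "e \<in> E0" "monoc e \<psi>" using obs by blast
        then obtain a where a: "\<forall>v\<in>e. \<psi> v = a" unfolding monoc_def by blast
        have eF: "e \<subseteq> F" using e(1) F by blast
        have "e \<noteq> {}" using edge_card[of e] e(1) E0 m2 by auto
        then obtain w where w: "w \<in> e" by blast
        have "\<forall>v\<in>e. \<phi> (f (tau B u i v)) = \<phi> (f (tau B u i w))"
        proof
          fix v assume v: "v \<in> e"
          have "\<beta> (\<phi> (f (tau B u i v))) = \<beta> (\<phi> (f (tau B u i w)))"
          proof -
            have vF: "v \<in> F" "w \<in> F" using v w eF by auto
            have "\<psi> v = a" "\<psi> w = a" using a v w by auto
            then show ?thesis using vF unfolding \<psi>_def by simp
          qed
          then show "\<phi> (f (tau B u i v)) = \<phi> (f (tau B u i w))"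
            using beta(2) inC' v w eF unfolding inj_on_def by blast
        qed
        then show ?thesis using e(1) inC' w eF by blast
      qed
      define ee where "ee i = (SOME e. e \<in> E0 \<and> (\<exists>c'\<in>C'. \<forall>v\<in>e. \<phi> (f (tau B u i v)) = c'))" for i
      have ee: "ee i \<in> E0 \<and> (\<exists>c'\<in>C'. \<forall>v\<in>ee i. \<phi> (f (tau B u i v)) = c')" if "i < k" for i
        unfolding ee_def by (rule someI_ex) (use ex[OF that] in blast)
      define cc where "cc i = \<phi> (f (tau B u i (SOME w. w \<in> ee i)))" for i
      have ne: "ee i \<noteq> {}" if "i < k" for i using edge_card[of "ee i"] ee[OF that] E0 m2 by auto
      have cc: "cc i \<in> C' \<and> (\<forall>v\<in>ee i. \<phi> (f (tau B u i v)) = cc i)" if "i < k" for i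
      proof -
        have "(SOME w. w \<in> ee i) \<in> ee i" using ne[OF that] by (simp add: some_in_eq)
        then show ?thesis using ee[OF that] unfolding cc_def by auto
      qed
      have "\<not> inj_on cc {..<k}"
      proof
        assume "inj_on cc {..<k}"
        then have "card (cc ` {..<k}) = k" by (simp add: card_image)
        moreover have "cc ` {..<k} \<subseteq> C'" using cc by auto
        ultimately have "k \<le> card C'" using fC' by (metis card_mono)
        then show False using cardC' by simp
      qed
      then obtain i j where ij: "i < k" "j < k" "i \<noteq> j" "cc i = cc j"
        unfolding inj_on_def by blast
      obtain w where w: "w \<in> ee j" using ne[OF ij(2)] by blast
      have eiF: "ee i \<subseteq> F" using ee[OF ij(1)] F by blast
      have wF: "w \<in> F" using ee[OF ij(2)] F w by blast
      define Z where "Z = tau B u i ` ee i"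
      define Y where "Y = insert (tau B u j w) Z"
      have ZE: "Z \<in> cong_edges M" unfolding Z_def
        using cong_edges_iso[OF _ iso_tau] ee[OF ij(1)] E0 by blast
      have cZ: "card Z = m" using edge_card[OF ZE] by simp
      have fZ: "finite Z" using edge_card[OF ZE] by simp
      have nin: "tau B u j w \<notin> Z"
      proof
        assume "tau B u j w \<in> Z"
        then obtain v where v: "v \<in> ee i" "tau B u j w = tau B u i v" unfolding Z_def by blast
        then have "j = i" using tau_disj2[OF u B Fb[OF wF] Fb] eiF by blast
        then show False using ij by simp
      qed
      have cY: "card Y = m + 1" unfolding Y_def using cZ fZ nin by simp
      have sY: "Y \<subseteq> G T" unfolding Y_def Z_def G_def using ij eiF wF by blast
      have "f ` Y \<in> cong_edges S" by (rule mk[OF T(1) T(2) sY cY ZE]) (auto simp: Y_def)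
      moreover have "\<forall>y\<in>f ` Y. \<phi> y = cc i"
        unfolding Y_def Z_def using cc[OF ij(1)] cc[OF ij(2)] w ij(4) by auto
      ultimately show False using nomono by blast
    qed
  qed
qed



lemma subsume:
  assumes "\<forall>Y'\<in>E2. \<exists>X\<in>E1. X \<subseteq> Y'" "proper_coloring V E1 C \<phi>"
  shows "proper_coloring V E2 C \<phi>"
  using assms unfolding proper_coloring_def by (meson subsetD)

lemma proper_recolor:
  assumes "proper_coloring V E C \<phi>" "\<forall>v\<in>V. \<phi> v \<in> C'"
  shows "proper_coloring V E C' \<phi>"
  using assms unfolding proper_coloring_def by blast

theorem theorem3p1:
  fixes M :: "'a::euclidean_space set set" and m :: nat
  assumes "m \<ge> 2"
    and "M \<noteq> {}" and "finite M"
    and "\<forall>T\<in>M. is_gon m T"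
  shows "\<exists>S :: 'a set set. finite S \<and> (\<forall>Y\<in>S. is_gon (m + 1) Y) \<and>
           hyp_equivalent TYPE('c) UNIV (cong_edges M) (cong_edges S)"
proof -
  note m2 = assms(1) and Mne = assms(2) and fM = assms(3) and gon = assms(4)
  define E1 where "E1 = cong_edges M"
  obtain n0 where n0: "colorable UNIV E1 n0" using chrom_finite[OF fM gon m2] unfolding E1_def by blast
  define k where "k = chromatic_number UNIV E1"
  have ck: "colorable UNIV E1 k" unfolding k_def chromatic_number_def by (rule LeastI) (rule n0)
  have nlt: "\<not> colorable UNIV E1 j" if "j < k" for j
    using not_less_Least[of j "colorable UNIV E1"] that unfolding k_def chromatic_number_def by blast
  have edge_card: "finite X \<and> card X = m" if "X \<in> E1" for X
    using cong_edges_card[OF gon] that unfolding E1_def by blast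
  have k2: "k \<ge> 2"
  proof (rule ccontr)
    assume "\<not> k \<ge> 2"
    then have k1: "k \<le> 1" by simp
    obtain \<phi> :: "'a \<Rightarrow> nat" where \<phi>: "proper_coloring UNIV E1 {..<k} \<phi>"
      using ck unfolding colorable_def by blast
    have z: "\<phi> v = 0" for v
    proof -
      have "\<phi> v \<in> {..<k}" using \<phi> unfolding proper_coloring_def by blast
      then show ?thesis using k1 by simp
    qed
    obtain T0 where T0: "T0 \<in> M" using Mne by blast
    have "T0 \<in> E1" unfolding E1_def using T0 by (rule cong_edges_self)
    then show False using \<phi> z unfolding proper_coloring_def by blast
  qed
  define K where "K = {..<k-1}"
  have "\<not> (\<forall>E0. E0 \<subseteq> E1 \<and> finite E0 \<longrightarrow> (\<exists>\<phi>::'a\<Rightarrow>nat. (\<forall>v. \<phi> v \<in> K) \<and> (\<forall>e\<in>E0. \<not> monoc e \<phi>)))"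
  proof
    assume h: "\<forall>E0. E0 \<subseteq> E1 \<and> finite E0 \<longrightarrow> (\<exists>\<phi>::'a\<Rightarrow>nat. (\<forall>v. \<phi> v \<in> K) \<and> (\<forall>e\<in>E0. \<not> monoc e \<phi>))"
    have "\<exists>\<phi>::'a\<Rightarrow>nat. (\<forall>v. \<phi> v \<in> K) \<and> (\<forall>e\<in>E1. \<not> monoc e \<phi>)"
      by (rule compactness_col) (use edge_card h in \<open>auto simp: K_def\<close>)
    then have "colorable UNIV E1 (k - 1)"
      unfolding colorable_def proper_coloring_def K_def monoc_def by blast
    then show False using nlt k2 by simp
  qed
  then have "\<exists>E0. E0 \<subseteq> E1 \<and> finite E0 \<and> \<not> (\<exists>\<phi>::'a\<Rightarrow>nat. (\<forall>v. \<phi> v \<in> K) \<and> (\<forall>e\<in>E0. \<not> monoc e \<phi>))"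
    by blast
  then obtain E0 where E0: "E0 \<subseteq> E1" "finite E0"
    and obs0: "\<not> (\<exists>\<phi>::'a\<Rightarrow>nat. (\<forall>v. \<phi> v \<in> K) \<and> (\<forall>e\<in>E0. \<not> monoc e \<phi>))"
    by blast
  have obs: "\<forall>\<psi>::'a\<Rightarrow>nat. (\<forall>v. \<psi> v \<in> {..<k-1}) \<longrightarrow> (\<exists>e\<in>E0. monoc e \<psi>)"
    using obs0 unfolding K_def by blast
  define F where "F = \<Union>E0"
  have fF: "finite F" unfolding F_def using E0 edge_card by blast
  have fUM: "finite (\<Union>M)" using fM gon unfolding is_gon_def by blast
  have "bounded (\<Union>M \<union> F)" using fUM fF by (simp add: finite_imp_bounded)
  then obtain B where B: "B > 0" "\<forall>x\<in>\<Union>M \<union> F. norm x \<le> B" using bounded_pos by blast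
  obtain u :: 'a where uB: "u \<in> Basis" using nonempty_Basis by blast
  have u: "norm u = 1" using uB by simp
  define S where "S = constrS M m k F B u"
  define G where "G T = T \<union> (\<Union>i<k. tau B u i ` F)" for T
  have fG: "finite (G T)" if "T \<in> M" for T
    unfolding G_def using that gon fF unfolding is_gon_def by auto
  have SG: "S \<subseteq> (\<Union>T\<in>M. Pow (G T))" unfolding S_def constrS_def G_def by auto
  have fS: "finite S"
    by (rule finite_subset[OF SG]) (use fM fG in auto)
  have gS: "\<forall>Y\<in>S. is_gon (m + 1) Y"
  proof
    fix Y assume "Y \<in> S"
    then obtain T where "T \<in> M" "Y \<subseteq> G T" "card Y = m + 1"
      unfolding S_def constrS_def G_def by blast
    then show "is_gon (m + 1) Y" unfolding is_gon_def using fG finite_subset by blast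
  qed
  define E2 where "E2 = cong_edges S"
  have sub: "\<forall>Y'\<in>E2. \<exists>X\<in>E1. X \<subseteq> Y'"
  proof
    fix Y' assume "Y' \<in> E2"
    then obtain Y h where Y: "Y \<in> S" "isometry h" "h ` Y = Y'"
      unfolding E2_def cong_edges_def congruent_def by blast
    then obtain X where X: "X \<in> E1" "X \<subseteq> Y" unfolding S_def constrS_def E1_def by blast
    have "h ` X \<in> E1" using cong_edges_iso[OF _ Y(2)] X(1) unfolding E1_def by blast
    moreover have "h ` X \<subseteq> Y'" using X(2) Y(3) by blast
    ultimately show "\<exists>X\<in>E1. X \<subseteq> Y'" by blast
  qed
  have keyS: "proper_coloring UNIV E1 C \<phi>"
    if "finite C" "card C \<le> k" "proper_coloring UNIV E2 C \<phi>" for C :: "'b set" and \<phi>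
    using key[OF gon m2 k2 E0(1)[unfolded E1_def] obs F_def u B(1) B(2)] that
    unfolding E1_def E2_def S_def by blast
  have keyN: "proper_coloring UNIV E1 C \<phi>"
    if "finite C" "card C \<le> k" "proper_coloring UNIV E2 C \<phi>" for C :: "nat set" and \<phi>
    using key[OF gon m2 k2 E0(1)[unfolded E1_def] obs F_def u B(1) B(2)] that
    unfolding E1_def E2_def S_def by blast
  have keyC: "proper_coloring UNIV E1 C \<phi>"
    if "finite C" "card C \<le> k" "proper_coloring UNIV E2 C \<phi>" for C :: "'c set" and \<phi>
    using key[OF gon m2 k2 E0(1)[unfolded E1_def] obs F_def u B(1) B(2)] that
    unfolding E1_def E2_def S_def by blast
  have c2: "colorable UNIV E2 k" using ck subsume[OF sub] unfolding colorable_def by blast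
  have chi2: "chromatic_number UNIV E2 = k"
    unfolding chromatic_number_def
  proof (rule Least_equality)
    show "colorable UNIV E2 k" by (rule c2)
  next
    fix j assume cj: "colorable UNIV E2 j"
    show "k \<le> j"
    proof (rule ccontr)
      assume "\<not> k \<le> j"
      then have jk: "j < k" by simp
      obtain \<phi> :: "'a \<Rightarrow> nat" where \<phi>: "proper_coloring UNIV E2 {..<j} \<phi>"
        using cj unfolding colorable_def by blast
      have "proper_coloring UNIV E2 {..<k} \<phi>"
      proof (rule proper_recolor[OF \<phi>], intro ballI)
        fix v :: 'a
        have "\<phi> v < j" using \<phi> unfolding proper_coloring_def by blast
        then show "\<phi> v \<in> {..<k}" using jk by simp
      qed
      then have "proper_coloring UNIV E1 {..<k} \<phi>" by (intro keyN) auto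
      then have "proper_coloring UNIV E1 {..<j} \<phi>"
        by (rule proper_recolor) (use \<phi> in \<open>auto simp: proper_coloring_def\<close>)
      then have "colorable UNIV E1 j" unfolding colorable_def by blast
      then show False using nlt jk by blast
    qed
  qed
  have "hyp_equivalent TYPE('c) UNIV E1 E2"
    unfolding hyp_equivalent_def
  proof (intro conjI allI impI)
    show "\<exists>n. colorable UNIV E1 n" using n0 by blast
    show "\<exists>n. colorable UNIV E2 n" using c2 by blast
    show "chromatic_number UNIV E1 = chromatic_number UNIV E2" using chi2 k_def by simp
  next
    fix C :: "'c set" and \<phi> :: "'a \<Rightarrow> 'c"
    assume "finite C \<and> card C = chromatic_number UNIV E1"
    then have C: "finite C" "card C = k" unfolding k_def by auto
    show "proper_coloring UNIV E1 C \<phi> = proper_coloring UNIV E2 C \<phi>"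
      using subsume[OF sub] keyC[OF C(1)] C(2) by auto
  qed
  then show ?thesis using fS gS unfolding E1_def E2_def by blast
qed

end
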